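(* Let $f\in\bar U_{NP}$ with partition spacing constant $\Xi$, let $\iota\in I$ and $\sigma\in\{-1,1\}$ be such that $v_\iota(\sigma)\notin\{-1,1\}$. Let $\tau_{\iota,\sigma}=\sigma\,\mathrm{sgn}\,v_\iota'(0)$ and $T_{\iota,\sigma}(x)=1-v_\iota(x)/\tau_{\iota,\sigma}$. Then $T_{\iota,\sigma}(x)\ge\Xi^{-1}|\mathcal{O}_\iota|$ for all $x\in[-1,1]$. If moreover $f$ satisfies the analytic distortion condition $(\mathrm{AD}_\delta)$, then there exist $\zeta\in(0,\delta]$ and $\mathfrak{K}_\zeta>0$ such that $|T_{\iota,\sigma}(z)|\ge\mathfrak{K}_\zeta|\mathcal{O}_\iota|$ for all $z\in\check\Lambda_\zeta$.
   Context: Class $\bar U_{NP}$: full-branch Markov maps $f$ of $[-1,1]$: disjoint open intervals $\mathcal{O}_\iota$, $\iota\in I$ ($I$ countable), covering $[-1,1]$ up to a countable set, with $f|_{\mathcal{O}_\iota}$ extending to a $C^2$ bijection $\hat f_\iota:\overline{\mathcal{O}_\iota}\to[-1,1]$ and $v_\iota=\hat f_\iota^{-1}$; required: $\sup_{\iota,x}|v_\iota''/v_\iota'|<\infty$, $\inf_{x\in\cup\mathcal{O}_\iota}\frac{\sqrt{1-x^2}}{\sqrt{1-f(x)^2}}|f'(x)|>0$, and partition spacing constant $\Xi:=\sup\{|\mathcal{O}_\iota|/d(\mathcal{O}_\iota,\sigma):\iota\in I,\sigma\in\{\pm1\},\sigma\notin\overline{\mathcal{O}_\iota}\}<\infty$.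 $\check\Lambda_\zeta$ denotes the closed region bounded by the Bernstein ellipse of parameter $e^\zeta$ (centre $0$, semi-axes $\cosh\zeta$ along $\mathbb{R}$ and $\sinh\zeta$ along $i\mathbb{R}$). $(\mathrm{AD}_\delta)$: each $v_\iota$ is holomorphic on $\check\Lambda_\delta$ and $\sup_{\iota,z\in\check\Lambda_\delta}|v_\iota''(z)/v_\iota'(z)|<\infty$. *)

theory Defs
  imports "HOL-Analysis.Analysis" "HOL-Complex_Analysis.Complex_Analysis"
begin

definition ilen :: "real set \<Rightarrow> real" where
  "ilen S = Sup S - Inf S"

text \<open>Closed region bounded by the Bernstein ellipse of parameter exp zeta
  (semi-axes cosh zeta along the real axis, sinh zeta along the imaginary axis).\<close>
definition bernstein_region :: "real \<Rightarrow> complex set" where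
  "bernstein_region \<zeta> =
     {z. (Re z)\<^sup>2 / (cosh \<zeta>)\<^sup>2 + (Im z)\<^sup>2 / (sinh \<zeta>)\<^sup>2 \<le> 1}"

definition spacing_ratios :: "'i set \<Rightarrow> ('i \<Rightarrow> real set) \<Rightarrow> real set" where
  "spacing_ratios I Os =
     {ilen (Os \<iota>) / infdist \<sigma> (Os \<iota>) | \<iota> \<sigma>.
        \<iota> \<in> I \<and> \<sigma> \<in> {-1, 1} \<and> \<sigma> \<notin> closure (Os \<iota>)}"

definition spacing_const :: "'i set \<Rightarrow> ('i \<Rightarrow> real set) \<Rightarrow> real" where
  "spacing_const I Os = Sup (spacing_ratios I Os)"

text \<open>Class bar U_NP.  f is the map, I the countable index set, Os the partition
  intervals, v the inverse branches (v \<iota> = inverse of the extension of f on the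
  closure of Os \<iota>), with first and second derivatives dv, ddv on [-1,1].\<close>
definition in_UNP ::
  "(real \<Rightarrow> real) \<Rightarrow> 'i set \<Rightarrow> ('i \<Rightarrow> real set) \<Rightarrow>
   ('i \<Rightarrow> real \<Rightarrow> real) \<Rightarrow> ('i \<Rightarrow> real \<Rightarrow> real) \<Rightarrow> ('i \<Rightarrow> real \<Rightarrow> real) \<Rightarrow> bool" where
  "in_UNP f I Os v dv ddv \<longleftrightarrow>
     countable I \<and>
     (\<forall>\<iota>\<in>I. \<exists>a b. -1 \<le> a \<and> a < b \<and> b \<le> 1 \<and> Os \<iota> = {a<..<b}) \<and>
     (\<forall>\<iota>\<in>I. \<forall>\<kappa>\<in>I. \<iota> \<noteq> \<kappa> \<longrightarrow> Os \<iota> \<inter> Os \<kappa> = {}) \<and>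
     countable ({-1..1} - (\<Union>\<iota>\<in>I. Os \<iota>)) \<and>
     (\<forall>\<iota>\<in>I. bij_betw (v \<iota>) {-1..1} (closure (Os \<iota>)) \<and>
        (\<forall>x\<in>Os \<iota>. f x \<in> {-1..1} \<and> v \<iota> (f x) = x) \<and>
        (\<forall>x\<in>{-1..1}. (v \<iota> has_real_derivative dv \<iota> x) (at x within {-1..1}) \<and>
                      (dv \<iota> has_real_derivative ddv \<iota> x) (at x within {-1..1})) \<and>
        continuous_on {-1..1} (ddv \<iota>)) \<and>
     (\<exists>C. \<forall>\<iota>\<in>I. \<forall>x\<in>{-1..1}. dv \<iota> x \<noteq> 0 \<and> \<bar>ddv \<iota> x / dv \<iota> x\<bar> \<le> C) \<and>
     (\<exists>c>0. \<forall>\<iota>\<in>I. \<forall>x\<in>Os \<iota>.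
        c \<le> sqrt (1 - x\<^sup>2) / sqrt (1 - (f x)\<^sup>2) * \<bar>deriv f x\<bar>) \<and>
     bdd_above (spacing_ratios I Os)"

text \<open>Analytic distortion condition (AD_delta): V \<iota> is the holomorphic extension
  of v \<iota> to (a neighbourhood of) the closed Bernstein region.\<close>
definition AD ::
  "real \<Rightarrow> 'i set \<Rightarrow> ('i \<Rightarrow> real \<Rightarrow> real) \<Rightarrow> ('i \<Rightarrow> complex \<Rightarrow> complex) \<Rightarrow> bool" where
  "AD \<delta> I v V \<longleftrightarrow>
     0 < \<delta> \<and>
     (\<forall>\<iota>\<in>I. V \<iota> analytic_on bernstein_region \<delta> \<and>
        (\<forall>x\<in>{-1..1}. V \<iota> (complex_of_real x) = complex_of_real (v \<iota> x))) \<and>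
     (\<exists>C. \<forall>\<iota>\<in>I. \<forall>z\<in>bernstein_region \<delta>.
        deriv (V \<iota>) z \<noteq> 0 \<and> cmod (deriv (deriv (V \<iota>)) z / deriv (V \<iota>) z) \<le> C)"

end

theory Submission imports Defs begin

lemma UNP_int: assumes "in_UNP f I Os v dv ddv"
  shows "\<forall>\<iota>\<in>I. \<exists>a b. -1 \<le> a \<and> a < b \<and> b \<le> 1 \<and> Os \<iota> = {a<..<b}"
  using assms unfolding in_UNP_def by (elim conjE) assumption

lemma UNP_br: assumes "in_UNP f I Os v dv ddv"
  shows "\<forall>\<iota>\<in>I. bij_betw (v \<iota>) {-1..1} (closure (Os \<iota>)) \<and>
        (\<forall>x\<in>Os \<iota>. f x \<in> {-1..1} \<and> v \<iota> (f x) = x) \<and>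
        (\<forall>x\<in>{-1..1}. (v \<iota> has_real_derivative dv \<iota> x) (at x within {-1..1}) \<and>
                      (dv \<iota> has_real_derivative ddv \<iota> x) (at x within {-1..1})) \<and>
        continuous_on {-1..1} (ddv \<iota>)"
  using assms unfolding in_UNP_def by (elim conjE) assumption

lemma UNP_nz: assumes "in_UNP f I Os v dv ddv"
  shows "\<exists>C. \<forall>\<iota>\<in>I. \<forall>x\<in>{-1..1}. dv \<iota> x \<noteq> 0 \<and> \<bar>ddv \<iota> x / dv \<iota> x\<bar> \<le> C"
  using assms unfolding in_UNP_def by (elim conjE) assumption

lemma UNP_bdd: assumes "in_UNP f I Os v dv ddv"
  shows "bdd_above (spacing_ratios I Os)"
  using assms unfolding in_UNP_def by (elim conjE) assumption

lemma UNP_der: assumes "in_UNP f I Os v dv ddv" "i \<in> I" "x \<in> {-1..1}"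
  shows "(v i has_real_derivative dv i x) (at x within {-1..1})"
  using UNP_br[OF assms(1)] assms(2,3) by blast

lemma branch_basic:
  assumes U: "in_UNP f I Os v dv ddv" and i: "i \<in> I"
  obtains a b s where "-1 \<le> a" "a < b" "b \<le> 1" "Os i = {a<..<b}"
    "s = sgn (dv i 0)" "s = 1 \<or> s = -1"
    "\<And>x. x \<in> {-1..1} \<Longrightarrow> s * dv i x > 0"
    "\<And>x y. x \<in> {-1..1} \<Longrightarrow> y \<in> {-1..1} \<Longrightarrow> x \<le> y \<Longrightarrow> s * v i x \<le> s * v i y"
    "v i ` {-1..1} = {a..b}"
proof -
  from UNP_int[OF U] i obtain a b where ab: "-1 \<le> a" "a < b" "b \<le> 1" "Os i = {a<..<b}"
    by blast
  have br: "bij_betw (v i) {-1..1} (closure (Os i)) \<and>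
        (\<forall>x\<in>{-1..1}. (v i has_real_derivative dv i x) (at x within {-1..1}) \<and>
                      (dv i has_real_derivative ddv i x) (at x within {-1..1}))"
    using UNP_br[OF U] i by blast
  hence bij: "bij_betw (v i) {-1..1} (closure (Os i))"
    and der: "\<And>x. x\<in>{-1..1} \<Longrightarrow> (v i has_real_derivative dv i x) (at x within {-1..1}) \<and>
                      (dv i has_real_derivative ddv i x) (at x within {-1..1})"
    by blast+
  from UNP_nz[OF U] i have nz: "\<And>x. x\<in>{-1..1} \<Longrightarrow> dv i x \<noteq> 0"
    by blast
  have img: "v i ` {-1..1} = {a..b}" using bij ab by (simp add: bij_betw_def)
  have cont: "continuous_on {-1..1} (dv i)"
    unfolding continuous_on_eq_continuous_within using der DERIV_continuous by blast
  define s where "s = sgn (dv i 0)"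
  have s01: "s = 1 \<or> s = -1" using nz[of 0] by (auto simp: s_def sgn_real_def)
  have pos: "s * dv i x > 0" if x: "x \<in> {-1..1}" for x
  proof (rule ccontr)
    assume "\<not> s * dv i x > 0"
    hence neg: "s * dv i x < 0" using nz[OF x] s01 by (auto simp: mult_less_0_iff)
    have p0: "s * dv i 0 > 0" using nz[of 0] by (auto simp: s_def sgn_real_def)
    have c2: "continuous_on {-1..1} (\<lambda>t. s * dv i t)"
      by (intro continuous_intros cont)
    show False
    proof (cases "x \<le> 0")
      case True
      have "continuous_on {x..0} (\<lambda>t. s * dv i t)"
        by (rule continuous_on_subset[OF c2]) (use x in auto)
      then obtain t where "x \<le> t" "t \<le> 0" "s * dv i t = 0"
        using IVT'[of "\<lambda>t. s * dv i t" x 0 0] neg p0 True by force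
      thus False using nz[of t] s01 x by auto
    next
      case False
      have "continuous_on {0..x} (\<lambda>t. s * dv i t)"
        by (rule continuous_on_subset[OF c2]) (use x in auto)
      then obtain t where "0 \<le> t" "t \<le> x" "s * dv i t = 0"
        using IVT2'[of "\<lambda>t. s * dv i t" x 0 0] neg p0 False by force
      thus False using nz[of t] s01 x by auto
    qed
  qed
  have mono: "s * v i x \<le> s * v i y" if "x \<in> {-1..1}" "y \<in> {-1..1}" "x \<le> y" for x y
  proof -
    have "\<exists>z\<in>{x..y}. s * v i y - s * v i x = (*) (s * dv i z) (y - x)"
    proof (rule mvt_very_simple[OF \<open>x \<le> y\<close>])
      fix t assume "x \<le> t" "t \<le> y"
      hence t: "t \<in> {-1..1}" using that by auto
      have "((\<lambda>t. s * v i t) has_real_derivative s * dv i t) (at t within {-1..1})"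
        using DERIV_cmult[of "v i" "dv i t" t "{-1..1}" s] der[OF t] by blast
      hence "((\<lambda>t. s * v i t) has_real_derivative s * dv i t) (at t within {x..y})"
        by (rule DERIV_subset) (use that in auto)
      thus "((\<lambda>t. s * v i t) has_derivative (*) (s * dv i t)) (at t within {x..y})"
        by (simp add: has_field_derivative_def)
    qed
    then obtain z where z: "z \<in> {x..y}" "s * v i y - s * v i x = (s * dv i z) * (y - x)" by auto
    have "s * dv i z > 0" using pos[of z] z that by auto
    hence "(s * dv i z) * (y - x) \<ge> 0" using that by simp
    thus ?thesis using z(2) by linarith
  qed
  show thesis using that[OF ab s_def s01 pos mono img] .
qed


lemma ilen_ioo: "a < b \<Longrightarrow> ilen {a<..<(b::real)} = b - a"
  by (simp add: ilen_def)

lemma part1: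
  assumes U: "in_UNP f I Os v dv ddv" and i: "i \<in> I" and sg: "\<sigma> \<in> {-1, 1::real}"
    and nv: "v i \<sigma> \<notin> {-1, 1}"
  shows "spacing_const I Os > 0"
    "\<forall>x\<in>{-1..1}. 1 - v i x / (\<sigma> * sgn (dv i 0)) \<ge> ilen (Os i) / spacing_const I Os"
proof -
  obtain a b s where ab: "-1 \<le> a" "a < b" "b \<le> 1" "Os i = {a<..<b}"
    and s: "s = sgn (dv i 0)" "s = 1 \<or> s = -1"
    and pos: "\<And>x. x \<in> {-1..1} \<Longrightarrow> s * dv i x > 0"
    and mono: "\<And>x y. x \<in> {-1..1} \<Longrightarrow> y \<in> {-1..1} \<Longrightarrow> x \<le> y \<Longrightarrow> s * v i x \<le> s * v i y"
    and img: "v i ` {-1..1} = {a..b}"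
    by (rule branch_basic[OF U i]) (rule that)
  define t where "t = \<sigma> * s"
  have t01: "t = 1 \<or> t = -1" using s(2) sg by (auto simp: t_def)
  have tmax: "t * v i x \<le> t * v i \<sigma>" if x: "x \<in> {-1..1}" for x
    using sg mono[of x 1] mono[of "-1" x] x by (auto simp: t_def)
  define p where "p = v i \<sigma>"
  have pab: "p \<in> {a..b}" using img sg by (auto simp: p_def)
  have tmaxy: "t * y \<le> t * p" if "y \<in> {a..b}" for y
    using that img tmax unfolding p_def by (metis imageE)
  have p1: "p \<noteq> 1" "p \<noteq> -1" using nv by (auto simp: p_def)
  have tp: "t * p < 1" using pab ab t01 p1 by auto
  have tnot: "t \<notin> {a..b}"
  proof
    assume "t \<in> {a..b}"
    hence "t * t \<le> t * p" by (rule tmaxy)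
    thus False using tp t01 by auto
  qed
  have cl: "closure (Os i) = {a..b}" using ab by simp
  have tnc: "t \<notin> closure (Os i)" using tnot cl by simp
  define d where "d = infdist t (Os i)"
  have ne: "{a<..<b} \<noteq> {}" using ab by simp
  have "infdist t {a..b} > 0" using tnot ab by (intro infdist_pos_not_in_closed) auto
  also have "infdist t {a..b} \<le> d" unfolding d_def ab(4)
    by (rule infdist_mono) (use ne in auto)
  finally have dpos: "d > 0" .
  have "{a<..<b} \<subseteq> {y. d \<le> dist t y}" unfolding d_def ab(4) by (auto intro: infdist_le)
  hence "closure {a<..<b} \<subseteq> {y. d \<le> dist t y}"
    by (rule closure_minimal) (intro closed_Collect_le continuous_intros)
  hence "d \<le> dist t p" using pab ab by auto
  also have "dist t p = 1 - t * p" using t01 tp by (auto simp: dist_real_def)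
  finally have dle: "d \<le> 1 - t * p" .
  have len: "ilen (Os i) = b - a" using ab by (simp add: ilen_ioo)
  have mem: "ilen (Os i) / d \<in> spacing_ratios I Os"
    unfolding spacing_ratios_def d_def using i t01 tnc by (auto simp: t_def)
  have bdd: "bdd_above (spacing_ratios I Os)" using UNP_bdd[OF U] .
  have Xge: "ilen (Os i) / d \<le> spacing_const I Os"
    unfolding spacing_const_def using mem bdd by (rule cSup_upper)
  have rpos: "ilen (Os i) / d > 0" using len ab dpos by simp
  show Xpos: "spacing_const I Os > 0" using Xge rpos by linarith
  have key: "ilen (Os i) / spacing_const I Os \<le> d"
    using Xge Xpos dpos rpos by (simp add: field_simps)
  show "\<forall>x\<in>{-1..1}. 1 - v i x / (\<sigma> * sgn (dv i 0)) \<ge> ilen (Os i) / spacing_const I Os"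
  proof
    fix x :: real assume x: "x \<in> {-1..1}"
    have "v i x / (\<sigma> * sgn (dv i 0)) = t * v i x" using t01 s(1) by (auto simp: t_def)
    thus "1 - v i x / (\<sigma> * sgn (dv i 0)) \<ge> ilen (Os i) / spacing_const I Os"
      using key dle tmax[OF x] unfolding p_def by linarith
  qed
qed


definition ell :: "real \<Rightarrow> complex set" where
  "ell d = {z. (Re z)\<^sup>2 / (cosh d)\<^sup>2 + (Im z)\<^sup>2 / (sinh d)\<^sup>2 < 1}"

lemma ell_open: "open (ell d)"
  unfolding ell_def divide_inverse by (intro open_Collect_less continuous_intros)

lemma sq_convex: assumes "0 \<le> u" "0 \<le> w" "u + w = 1"
  shows "(u*a + w*c)\<^sup>2 \<le> u*a\<^sup>2 + w*(c::real)\<^sup>2"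
proof -
  have w: "w = 1 - u" using assms(3) by simp
  have "u*a\<^sup>2 + w*c\<^sup>2 - (u*a + w*c)\<^sup>2 = u*w*(a-c)\<^sup>2"
    unfolding w by (simp add: power2_eq_square algebra_simps)
  moreover have "u*w*(a-c)\<^sup>2 \<ge> 0" using assms by simp
  ultimately show ?thesis by linarith
qed

lemma lin_comb_lt1:
  assumes "P < 1" "Q < 1" "0 \<le> u" "0 \<le> w" "u + w = 1"
  shows "u * P + w * Q < (1::real)"
proof (cases "u = 0")
  case True thus ?thesis using assms by simp
next
  case False
  hence "u * P < u * 1" using assms by (intro mult_strict_left_mono) auto
  moreover have "w * Q \<le> w * 1" using assms by (intro mult_left_mono) auto
  ultimately show ?thesis using assms by simp
qed

lemma quad_step:
  fixes A B a1 a2 c1 c2 u w :: real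
  assumes "0 \<le> u" "0 \<le> w" "u + w = 1" "0 \<le> A" "0 \<le> B"
  shows "(u*a1 + w*a2)\<^sup>2 / A + (u*c1 + w*c2)\<^sup>2 / B
     \<le> u * (a1\<^sup>2/A + c1\<^sup>2/B) + w * (a2\<^sup>2/A + c2\<^sup>2/B)"
proof -
  have "(u*a1 + w*a2)\<^sup>2 / A \<le> (u*a1\<^sup>2 + w*a2\<^sup>2) / A"
    using sq_convex[OF assms(1-3), of a1 a2] assms(4) by (rule divide_right_mono)
  moreover have "(u*c1 + w*c2)\<^sup>2 / B \<le> (u*c1\<^sup>2 + w*c2\<^sup>2) / B"
    using sq_convex[OF assms(1-3), of c1 c2] assms(5) by (rule divide_right_mono)
  moreover have "(u*a1\<^sup>2 + w*a2\<^sup>2) / A + (u*c1\<^sup>2 + w*c2\<^sup>2) / B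
      = u * (a1\<^sup>2/A + c1\<^sup>2/B) + w * (a2\<^sup>2/A + c2\<^sup>2/B)"
    by (simp add: add_divide_distrib distrib_left)
  ultimately show ?thesis by linarith
qed

lemma ell_convex: "convex (ell d)"
  unfolding convex_def
proof (intro ballI allI impI)
  fix x y :: complex and u w :: real
  assume x: "x \<in> ell d" and y: "y \<in> ell d" and uw: "0 \<le> u" "0 \<le> w" "u + w = 1"
  have re: "Re (u *\<^sub>R x + w *\<^sub>R y) = u * Re x + w * Re y" by simp
  have im: "Im (u *\<^sub>R x + w *\<^sub>R y) = u * Im x + w * Im y" by simp
  have "(Re (u *\<^sub>R x + w *\<^sub>R y))\<^sup>2 / (cosh d)\<^sup>2 + (Im (u *\<^sub>R x + w *\<^sub>R y))\<^sup>2 / (sinh d)\<^sup>2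
     \<le> u * ((Re x)\<^sup>2/(cosh d)\<^sup>2 + (Im x)\<^sup>2/(sinh d)\<^sup>2) + w * ((Re y)\<^sup>2/(cosh d)\<^sup>2 + (Im y)\<^sup>2/(sinh d)\<^sup>2)"
    unfolding re im by (rule quad_step[OF uw]) simp_all
  also have "\<dots> < 1"
    by (rule lin_comb_lt1[OF _ _ uw]) (use x y in \<open>simp_all add: ell_def\<close>)
  finally show "u *\<^sub>R x + w *\<^sub>R y \<in> ell d" by (simp add: ell_def)
qed

lemma ell_sub: "ell d \<subseteq> bernstein_region d"
  unfolding ell_def bernstein_region_def by auto

lemma bern_sub_ell: assumes "0 < z" "z < d" shows "bernstein_region z \<subseteq> ell d"
proof
  fix w assume w: "w \<in> bernstein_region z"
  have c: "(cosh z)\<^sup>2 < (cosh d)\<^sup>2" using assms cosh_real_strict_mono[of z d]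
    by (simp add: power_strict_mono)
  have s: "(sinh z)\<^sup>2 < (sinh d)\<^sup>2" using assms by (simp add: power_strict_mono)
  have sz: "(sinh z)\<^sup>2 > 0" using assms by simp
  have c': "cosh z \<le> cosh d" using assms cosh_real_strict_mono[of z d] by simp
  have r: "(Re w)\<^sup>2 / (cosh d)\<^sup>2 \<le> (Re w)\<^sup>2 / (cosh z)\<^sup>2"
    using c c' by (intro divide_left_mono) auto
  have sdp: "(sinh d)\<^sup>2 > 0" using s sz by linarith
  have i: "(Im w)\<^sup>2 / (sinh d)\<^sup>2 \<le> (Im w)\<^sup>2 / (sinh z)\<^sup>2"
    using s sz sdp by (intro divide_left_mono) auto
  show "w \<in> ell d"
  proof (cases "w = 0")
    case True thus ?thesis by (simp add: ell_def)
  next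
    case False
    hence "Re w \<noteq> 0 \<or> Im w \<noteq> 0" using complex_eq_iff by auto
    hence "(Re w)\<^sup>2 / (cosh d)\<^sup>2 < (Re w)\<^sup>2 / (cosh z)\<^sup>2 \<or> (Im w)\<^sup>2 / (sinh d)\<^sup>2 < (Im w)\<^sup>2 / (sinh z)\<^sup>2"
      using c s sz sdp by (auto intro!: divide_strict_left_mono mult_pos_pos)
    thus ?thesis using r i w by (auto simp: ell_def bernstein_region_def)
  qed
qed

lemma real_in_ell: assumes "0 < d" "x \<in> {-1..1}" shows "complex_of_real x \<in> ell d"
proof -
  have "cosh d > 1" using assms cosh_real_ge_1[of d] by (metis cosh_real_one_iff less_eq_real_def less_irrefl)
  hence "(cosh d)\<^sup>2 > 1" by (simp add: one_less_power)
  moreover have "x\<^sup>2 \<le> 1" using assms by (auto simp: abs_square_le_1 abs_le_iff)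
  ultimately show ?thesis by (simp add: ell_def)
qed

lemma ell_norm: assumes "0 < d" "w \<in> ell d" shows "cmod w \<le> cosh d"
proof -
  have sc: "(sinh d)\<^sup>2 \<le> (cosh d)\<^sup>2" using sinh_le_cosh_real[of d] assms
    by (simp add: power_mono)
  have sp: "(sinh d)\<^sup>2 > 0" using assms by simp
  have "(Im w)\<^sup>2 / (cosh d)\<^sup>2 \<le> (Im w)\<^sup>2 / (sinh d)\<^sup>2"
    using sc sp by (intro divide_left_mono) auto
  hence "((Re w)\<^sup>2 + (Im w)\<^sup>2) / (cosh d)\<^sup>2 < 1"
    using assms(2) by (simp add: ell_def add_divide_distrib)
  hence "(Re w)\<^sup>2 + (Im w)\<^sup>2 < (cosh d)\<^sup>2" by simp
  hence "(cmod w)\<^sup>2 \<le> (cosh d)\<^sup>2" by (simp add: cmod_power2)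
  thus ?thesis by (simp add: power2_le_iff_abs_le)
qed

lemma bern_bounds: assumes "0 < z" "w \<in> bernstein_region z"
  shows "\<bar>Re w\<bar> \<le> cosh z" "\<bar>Im w\<bar> \<le> sinh z"
proof -
  have w: "(Re w)\<^sup>2 / (cosh z)\<^sup>2 + (Im w)\<^sup>2 / (sinh z)\<^sup>2 \<le> 1"
    using assms(2) by (simp add: bernstein_region_def)
  have "(Re w)\<^sup>2 / (cosh z)\<^sup>2 \<le> 1" "(Im w)\<^sup>2 / (sinh z)\<^sup>2 \<le> 1"
  proof -
    have "(Re w)\<^sup>2 / (cosh z)\<^sup>2 \<ge> 0" "(Im w)\<^sup>2 / (sinh z)\<^sup>2 \<ge> 0" by simp_all
    thus "(Re w)\<^sup>2 / (cosh z)\<^sup>2 \<le> 1" "(Im w)\<^sup>2 / (sinh z)\<^sup>2 \<le> 1" using w by linarith+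
  qed
  hence "(Re w)\<^sup>2 \<le> (cosh z)\<^sup>2" "(Im w)\<^sup>2 \<le> (sinh z)\<^sup>2" using assms(1)
    by (simp_all add: divide_le_eq_1)
  thus "\<bar>Re w\<bar> \<le> cosh z" "\<bar>Im w\<bar> \<le> sinh z" using assms(1)
    by (simp_all add: power2_le_iff_abs_le)
qed


lemma len_endpoints:
  assumes U: "in_UNP f I Os v dv ddv" and i: "i \<in> I"
  shows "\<bar>v i 1 - v i (-1)\<bar> = ilen (Os i)"
proof -
  obtain a b s where ab: "-1 \<le> a" "a < b" "b \<le> 1" "Os i = {a<..<b}"
    and s: "s = sgn (dv i 0)" "s = 1 \<or> s = -1"
    and pos: "\<And>x. x \<in> {-1..1} \<Longrightarrow> s * dv i x > 0"
    and mono: "\<And>x y. x \<in> {-1..1} \<Longrightarrow> y \<in> {-1..1} \<Longrightarrow> x \<le> y \<Longrightarrow> s * v i x \<le> s * v i y"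
    and img: "v i ` {-1..1} = {a..b}"
    by (rule branch_basic[OF U i]) (rule that)
  have o1: "(1::real) \<in> {-1..1}" and o2: "(-1::real) \<in> {-1..1}" by simp_all
  have e: "v i 1 \<in> {a..b}" "v i (-1) \<in> {a..b}"
    unfolding img[symmetric] using imageI[OF o1] imageI[OF o2] by simp_all
  have lo: "s * v i (-1) \<le> s * y" if "y \<in> {a..b}" for y
  proof -
    have "y \<in> v i ` {-1..1}" using that unfolding img .
    then obtain x where x: "x \<in> {-1..1}" "y = v i x" by blast
    show ?thesis using mono[of "-1" x] x by simp
  qed
  have hi: "s * y \<le> s * v i 1" if "y \<in> {a..b}" for y
  proof -
    have "y \<in> v i ` {-1..1}" using that unfolding img .
    then obtain x where x: "x \<in> {-1..1}" "y = v i x" by blast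
    show ?thesis using mono[of x 1] x by simp
  qed
  have "a \<in> {a..b}" "b \<in> {a..b}" using ab by auto
  note l = lo[OF this(1)] lo[OF this(2)] hi[OF this(1)] hi[OF this(2)]
  have "\<bar>v i 1 - v i (-1)\<bar> = b - a"
  proof (cases "s = 1")
    case True
    hence "v i (-1) = a" "v i 1 = b" using l e by simp_all
    thus ?thesis using ab by simp
  next
    case False
    hence s1: "s = -1" using s(2) by simp
    hence "v i (-1) = b" "v i 1 = a" using l e by simp_all
    thus ?thesis using ab by simp
  qed
  thus ?thesis using ab by (simp add: ilen_ioo)
qed

lemma AD_pos: "AD \<delta> I v V \<Longrightarrow> 0 < \<delta>"
  unfolding AD_def by (elim conjE)

lemma AD_hol: assumes "AD \<delta> I v V" "i \<in> I" shows "V i holomorphic_on ell \<delta>"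
proof -
  have "V i analytic_on bernstein_region \<delta>" using assms unfolding AD_def by blast
  thus ?thesis using analytic_imp_holomorphic ell_sub holomorphic_on_subset by blast
qed

lemma AD_eq: assumes "AD \<delta> I v V" "i \<in> I" "x \<in> {-1..1}"
  shows "V i (complex_of_real x) = complex_of_real (v i x)"
  using assms unfolding AD_def by blast

lemma AD_C: assumes "AD \<delta> I v V"
  shows "\<exists>C. \<forall>\<iota>\<in>I. \<forall>z\<in>bernstein_region \<delta>.
        deriv (V \<iota>) z \<noteq> 0 \<and> cmod (deriv (deriv (V \<iota>)) z / deriv (V \<iota>) z) \<le> C"
  using assms unfolding AD_def by (elim conjE)

lemma deriv_real:
  assumes U: "in_UNP f I Os v dv ddv" and A: "AD \<delta> I v V" and i: "i \<in> I"
    and y: "y \<in> {-1..1}"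
  shows "deriv (V i) (complex_of_real y) = complex_of_real (dv i y)"
proof -
  have d: "0 < \<delta>" using AD_pos[OF A] .
  have hol: "V i holomorphic_on ell \<delta>" using AD_hol[OF A i] .
  have yE: "complex_of_real y \<in> ell \<delta>" using real_in_ell[OF d y] .
  have d1: "((\<lambda>t. V i (of_real t)) has_vector_derivative deriv (V i) (of_real y)) (at y within {-1..1})"
    by (intro has_vector_derivative_real_field holomorphic_derivI[OF hol ell_open yE])
  have dr: "(v i has_real_derivative dv i y) (at y within {-1..1})"
    using UNP_der[OF U i y] .
  have d2: "((\<lambda>t. complex_of_real (v i t)) has_vector_derivative of_real (dv i y)) (at y within {-1..1})"
    using has_vector_derivative_of_real[OF dr] .
  have d3: "((\<lambda>t. V i (of_real t)) has_vector_derivative of_real (dv i y)) (at y within {-1..1})"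
    by (rule has_vector_derivative_transform[OF y _ d2]) (use AD_eq[OF A i] in auto)
  show ?thesis
    using vector_derivative_unique_within_closed_interval[of "-1" 1 y, OF _ _ d1[unfolded cbox_interval[symmetric]] d3[unfolded cbox_interval[symmetric]]] y
    by (simp add: cbox_interval)
qed


lemma deriv_bound:
  assumes U: "in_UNP f I Os v dv ddv" and A: "AD \<delta> I v V" and i: "i \<in> I"
    and L: "0 \<le> L"
    and CL: "\<forall>\<iota>\<in>I. \<forall>z\<in>bernstein_region \<delta>. deriv (V \<iota>) z \<noteq> 0 \<and>
               cmod (deriv (deriv (V \<iota>)) z / deriv (V \<iota>) z) \<le> L"
  shows "\<forall>w\<in>ell \<delta>. cmod (deriv (V i) w) \<le> exp (L * (2 * cosh \<delta>)) * (ilen (Os i) / 2)"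
proof -
  have d: "0 < \<delta>" using AD_pos[OF A] .
  have hol: "V i holomorphic_on ell \<delta>" using AD_hol[OF A i] .
  have hol': "deriv (V i) holomorphic_on ell \<delta>" by (rule holomorphic_deriv[OF hol ell_open])
  have nz: "\<And>w. w \<in> ell \<delta> \<Longrightarrow> deriv (V i) w \<noteq> 0" using CL i ell_sub by blast
  have zE: "0 \<in> ell \<delta>" using real_in_ell[OF d, of 0] by simp
  obtain g where g: "g holomorphic_on ell \<delta>" "\<And>x. x \<in> ell \<delta> \<Longrightarrow> exp (g x) = deriv (V i) x"
    using holomorphic_logarithm_exists[OF ell_convex ell_open hol' nz zE] by blast
  have gd: "(g has_field_derivative deriv (deriv (V i)) w / deriv (V i) w) (at w within ell \<delta>)"
    if w: "w \<in> ell \<delta>" for w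
  proof -
    have dg: "(g has_field_derivative deriv g w) (at w)" using holomorphic_derivI[OF g(1) ell_open w] .
    have "((\<lambda>w. exp (g w)) has_field_derivative exp (g w) * deriv g w) (at w)"
      using DERIV_chain2[OF DERIV_exp dg] by simp
    hence e1: "(deriv (V i) has_field_derivative exp (g w) * deriv g w) (at w)"
      by (rule has_field_derivative_transform_within_open[OF _ ell_open w]) (use g(2) in auto)
    have e2: "(deriv (V i) has_field_derivative deriv (deriv (V i)) w) (at w)"
      using holomorphic_derivI[OF hol' ell_open w] .
    have "deriv (deriv (V i)) w = deriv (V i) w * deriv g w"
      using DERIV_unique[OF e2 e1] g(2)[OF w] by simp
    hence "deriv g w = deriv (deriv (V i)) w / deriv (V i) w" using nz[OF w] by (simp add: field_simps)
    thus ?thesis using holomorphic_derivI[OF g(1) ell_open w] by simp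
  qed
  have gb: "cmod (deriv (deriv (V i)) w / deriv (V i) w) \<le> L" if "w \<in> ell \<delta>" for w
    using CL i ell_sub that by blast
  have lip: "cmod (g w - g y) \<le> L * cmod (w - y)" if "w \<in> ell \<delta>" "y \<in> ell \<delta>" for w y
    by (rule field_differentiable_bound[OF ell_convex gd gb that])
  have "\<exists>x\<in>{-1..1}. v i 1 - v i (-1) = (\<lambda>x. (*) (dv i x)) x (1 - (-1))"
  proof (rule mvt_very_simple)
    fix x :: real assume "-1 \<le> x" "x \<le> 1"
    hence "(v i has_real_derivative dv i x) (at x within {-1..1})"
      using UNP_der[OF U i] by simp
    thus "(v i has_derivative (*) (dv i x)) (at x within {-1..1})"
      by (simp add: has_field_derivative_def)
  qed simp
  then obtain \<xi> where xi: "\<xi> \<in> {-1..1}" "v i 1 - v i (-1) = dv i \<xi> * 2" by auto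
  have dxi: "\<bar>dv i \<xi>\<bar> = ilen (Os i) / 2" using len_endpoints[OF U i] xi by auto
  have yE: "complex_of_real \<xi> \<in> ell \<delta>" using real_in_ell[OF d xi(1)] .
  have Vy: "cmod (deriv (V i) (complex_of_real \<xi>)) = ilen (Os i) / 2"
    using deriv_real[OF U A i xi(1)] dxi by simp
  show ?thesis
  proof
    fix w assume w: "w \<in> ell \<delta>"
    have nw: "cmod (w - complex_of_real \<xi>) \<le> 2 * cosh \<delta>"
      using ell_norm[OF d w] ell_norm[OF d yE] norm_triangle_ineq4[of w "complex_of_real \<xi>"] by linarith
    have "Re (g w) - Re (g (complex_of_real \<xi>)) \<le> cmod (g w - g (complex_of_real \<xi>))"
      using complex_Re_le_cmod[of "g w - g (complex_of_real \<xi>)"] by simp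
    also have "\<dots> \<le> L * cmod (w - complex_of_real \<xi>)" by (rule lip[OF w yE])
    also have "\<dots> \<le> L * (2 * cosh \<delta>)" by (rule mult_left_mono[OF nw L])
    finally have re: "Re (g w) \<le> Re (g (complex_of_real \<xi>)) + L * (2 * cosh \<delta>)" by simp
    have "cmod (deriv (V i) w) = exp (Re (g w))" by (simp add: g(2)[OF w, symmetric])
    also have "\<dots> \<le> exp (Re (g (complex_of_real \<xi>)) + L * (2 * cosh \<delta>))" using re by simp
    also have "\<dots> = exp (L * (2 * cosh \<delta>)) * cmod (deriv (V i) (complex_of_real \<xi>))"
      by (simp add: g(2)[OF yE, symmetric] exp_add)
    finally show "cmod (deriv (V i) w) \<le> exp (L * (2 * cosh \<delta>)) * (ilen (Os i) / 2)"
      using Vy by simp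
  qed
qed


lemma part2:
  assumes U: "in_UNP f I Os v dv ddv" and A: "AD \<delta> I v V"
  shows "\<exists>\<zeta>. 0 < \<zeta> \<and> \<zeta> \<le> \<delta> \<and> (\<exists>K > 0.
               \<forall>\<iota>\<in>I. \<forall>\<sigma>\<in>{-1, 1::real}. v \<iota> \<sigma> \<notin> {-1, 1} \<longrightarrow>
                 (\<forall>z\<in>bernstein_region \<zeta>.
                    cmod (1 - V \<iota> z / complex_of_real (\<sigma> * sgn (dv \<iota> 0)))
                      \<ge> K * ilen (Os \<iota>)))"
proof -
  have d: "0 < \<delta>" using AD_pos[OF A] .
  obtain C where C: "\<forall>\<iota>\<in>I. \<forall>z\<in>bernstein_region \<delta>. deriv (V \<iota>) z \<noteq> 0 \<and>
               cmod (deriv (deriv (V \<iota>)) z / deriv (V \<iota>) z) \<le> C"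
    using AD_C[OF A] by blast
  define L where "L = max C 0"
  have L: "0 \<le> L" by (simp add: L_def)
  have CL: "\<forall>\<iota>\<in>I. \<forall>z\<in>bernstein_region \<delta>. deriv (V \<iota>) z \<noteq> 0 \<and>
               cmod (deriv (deriv (V \<iota>)) z / deriv (V \<iota>) z) \<le> L"
  proof (intro ballI)
    fix \<iota> z assume "\<iota> \<in> I" "z \<in> bernstein_region \<delta>"
    hence h: "deriv (V \<iota>) z \<noteq> 0 \<and> cmod (deriv (deriv (V \<iota>)) z / deriv (V \<iota>) z) \<le> C"
      using C by blast
    have "C \<le> L" by (simp add: L_def)
    thus "deriv (V \<iota>) z \<noteq> 0 \<and> cmod (deriv (deriv (V \<iota>)) z / deriv (V \<iota>) z) \<le> L"
      using h by linarith
  qed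
  define X where "X = max (spacing_const I Os) 1"
  define D where "D = exp (L * (2 * cosh \<delta>))"
  have Xp: "X > 0" by (simp add: X_def)
  have Dp: "D > 0" by (simp add: D_def)
  have DXp: "1 / (D * X) > 0" using Xp Dp by simp
  define \<zeta> where "\<zeta> = min (\<delta>/2) (ln (1 + 1 / (D * X)))"
  have lnp: "ln (1 + 1 / (D * X)) > 0" using DXp by (intro ln_gt_zero) simp
  have zp: "0 < \<zeta>" using d lnp by (simp add: \<zeta>_def)
  have zd: "\<zeta> < \<delta>" using d by (simp add: \<zeta>_def)
  have ez: "exp \<zeta> - 1 \<le> 1 / (D * X)"
  proof -
    have "exp \<zeta> \<le> exp (ln (1 + 1 / (D * X)))" by (simp add: \<zeta>_def del: exp_ln)
    also have "\<dots> = 1 + 1 / (D * X)" by (rule exp_ln) (use DXp in linarith)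
    finally show ?thesis by simp
  qed
  define K where "K = 1 / (2 * X)"
  have Kp: "K > 0" using Xp by (simp add: K_def)
  have main: "cmod (1 - V \<iota> z / complex_of_real (\<sigma> * sgn (dv \<iota> 0))) \<ge> K * ilen (Os \<iota>)"
    if i: "\<iota> \<in> I" and sg: "\<sigma> \<in> {-1, 1::real}" and nv: "v \<iota> \<sigma> \<notin> {-1, 1}"
      and z: "z \<in> bernstein_region \<zeta>" for \<iota> \<sigma> z
  proof -
    have Xi: "spacing_const I Os > 0" and P1: "\<forall>x\<in>{-1..1}. 1 - v \<iota> x / (\<sigma> * sgn (dv \<iota> 0)) \<ge> ilen (Os \<iota>) / spacing_const I Os"
      using part1[OF U i sg nv] by auto
    have len0: "ilen (Os \<iota>) \<ge> 0" using len_endpoints[OF U i] by (metis abs_ge_zero)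
    have XX1: "spacing_const I Os \<le> X" by (simp add: X_def)
    have XX2: "0 < X * spacing_const I Os" using Xp Xi by simp
    have XX: "ilen (Os \<iota>) / X \<le> ilen (Os \<iota>) / spacing_const I Os"
      by (rule divide_left_mono[OF XX1 len0 XX2])
    define t where "t = \<sigma> * sgn (dv \<iota> 0)"
    have z01: "(0::real) \<in> {-1..1}" by simp
    have dv0: "dv \<iota> 0 \<noteq> 0" using UNP_nz[OF U] i z01 by blast
    have t01: "t = 1 \<or> t = -1" using sg dv0 by (auto simp: t_def sgn_real_def)
    define x where "x = max (-1) (min 1 (Re z))"
    have x: "x \<in> {-1..1}" by (simp add: x_def)
    have zE: "z \<in> ell \<delta>" using bern_sub_ell[OF zp zd] z by blast
    have xE: "complex_of_real x \<in> ell \<delta>" using real_in_ell[OF d x] .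
    have hol: "V \<iota> holomorphic_on ell \<delta>" using AD_hol[OF A i] .
    have DB: "\<forall>w\<in>ell \<delta>. cmod (deriv (V \<iota>) w) \<le> D * (ilen (Os \<iota>) / 2)"
      using deriv_bound[OF U A i L CL] unfolding D_def .
    have Vl: "cmod (V \<iota> z - V \<iota> (complex_of_real x)) \<le> D * (ilen (Os \<iota>) / 2) * cmod (z - complex_of_real x)"
    proof (rule field_differentiable_bound[OF ell_convex _ _ zE xE])
      fix u assume u: "u \<in> ell \<delta>"
      show "(V \<iota> has_field_derivative deriv (V \<iota>) u) (at u within ell \<delta>)"
        by (rule holomorphic_derivI[OF hol ell_open u])
      show "cmod (deriv (V \<iota>) u) \<le> D * (ilen (Os \<iota>) / 2)" using DB u by blast
    qed
    have bz: "\<bar>Re z\<bar> \<le> cosh \<zeta>" "\<bar>Im z\<bar> \<le> sinh \<zeta>" using bern_bounds[OF zp z] by auto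
    have "\<bar>Re z - x\<bar> \<le> cosh \<zeta> - 1" unfolding x_def max_def min_def using bz(1) cosh_real_ge_1[of \<zeta>] by (auto simp: abs_if)
    hence dz: "cmod (z - complex_of_real x) \<le> exp \<zeta> - 1"
      using cmod_le[of "z - complex_of_real x"] bz(2) cosh_plus_sinh[of \<zeta>] by simp
    have Dl0: "D * (ilen (Os \<iota>) / 2) \<ge> 0" using Dp len0 by simp
    have "cmod (V \<iota> z - V \<iota> (complex_of_real x)) \<le> D * (ilen (Os \<iota>) / 2) * (exp \<zeta> - 1)"
      using Vl mult_left_mono[OF dz Dl0] by (rule order.trans)
    also have "\<dots> \<le> D * (ilen (Os \<iota>) / 2) * (1 / (D * X))"
      using mult_left_mono[OF ez Dl0] .
    also have "\<dots> = ilen (Os \<iota>) / (2 * X)" using Dp by simp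
    finally have VV: "cmod (V \<iota> z - V \<iota> (complex_of_real x)) \<le> ilen (Os \<iota>) / (2 * X)" .
    have Vx: "V \<iota> (complex_of_real x) = complex_of_real (v \<iota> x)" using AD_eq[OF A i x] .
    have ct: "cmod (complex_of_real t) = 1" using t01 by auto
    have eq: "1 - V \<iota> z / complex_of_real t
        = complex_of_real (1 - v \<iota> x / t) - (V \<iota> z - V \<iota> (complex_of_real x)) / complex_of_real t"
      unfolding Vx by (simp add: diff_divide_distrib)
    have "cmod (complex_of_real (1 - v \<iota> x / t)) - cmod ((V \<iota> z - V \<iota> (complex_of_real x)) / complex_of_real t)
        \<le> cmod (1 - V \<iota> z / complex_of_real t)"
      unfolding eq by (rule norm_triangle_ineq2)
    moreover have "cmod ((V \<iota> z - V \<iota> (complex_of_real x)) / complex_of_real t) = cmod (V \<iota> z - V \<iota> (complex_of_real x))"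
      using ct by (simp add: norm_divide)
    moreover have "cmod (complex_of_real (1 - v \<iota> x / t)) \<ge> ilen (Os \<iota>) / X"
    proof -
      have p: "1 - v \<iota> x / t \<ge> ilen (Os \<iota>) / spacing_const I Os" using P1 x unfolding t_def by blast
      have "cmod (complex_of_real (1 - v \<iota> x / t)) = \<bar>1 - v \<iota> x / t\<bar>" by (rule norm_of_real)
      thus ?thesis using p XX by linarith
    qed
    moreover have "K * ilen (Os \<iota>) = ilen (Os \<iota>) / X - ilen (Os \<iota>) / (2 * X)"
      using Xp by (simp add: K_def field_simps)
    ultimately show ?thesis using VV unfolding t_def by linarith
  qed
  have "0 < \<zeta> \<and> \<zeta> \<le> \<delta> \<and> (\<exists>K > 0.
               \<forall>\<iota>\<in>I. \<forall>\<sigma>\<in>{-1, 1::real}. v \<iota> \<sigma> \<notin> {-1, 1} \<longrightarrow>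
                 (\<forall>z\<in>bernstein_region \<zeta>.
                    cmod (1 - V \<iota> z / complex_of_real (\<sigma> * sgn (dv \<iota> 0)))
                      \<ge> K * ilen (Os \<iota>)))"
  proof (intro conjI zp)
    show "\<zeta> \<le> \<delta>" using zd by simp
    show "\<exists>K > 0. \<forall>\<iota>\<in>I. \<forall>\<sigma>\<in>{-1, 1::real}. v \<iota> \<sigma> \<notin> {-1, 1} \<longrightarrow>
                 (\<forall>z\<in>bernstein_region \<zeta>.
                    cmod (1 - V \<iota> z / complex_of_real (\<sigma> * sgn (dv \<iota> 0)))
                      \<ge> K * ilen (Os \<iota>))"
      by (intro exI[of _ K] conjI Kp ballI impI main)
  qed
  thus ?thesis by blast
qed

theorem lemma8:
  fixes f :: "real \<Rightarrow> real" and I :: "'i set" and Os :: "'i \<Rightarrow> real set"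
    and v dv ddv :: "'i \<Rightarrow> real \<Rightarrow> real"
  assumes "in_UNP f I Os v dv ddv"
  shows "(\<forall>\<iota>\<in>I. \<forall>\<sigma>\<in>{-1, 1::real}. v \<iota> \<sigma> \<notin> {-1, 1} \<longrightarrow>
            (\<forall>x\<in>{-1..1}.
               1 - v \<iota> x / (\<sigma> * sgn (dv \<iota> 0)) \<ge> ilen (Os \<iota>) / spacing_const I Os))
       \<and> (\<forall>\<delta> (V :: 'i \<Rightarrow> complex \<Rightarrow> complex). AD \<delta> I v V \<longrightarrow>
            (\<exists>\<zeta>. 0 < \<zeta> \<and> \<zeta> \<le> \<delta> \<and> (\<exists>K > 0.
               \<forall>\<iota>\<in>I. \<forall>\<sigma>\<in>{-1, 1::real}. v \<iota> \<sigma> \<notin> {-1, 1} \<longrightarrow>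
                 (\<forall>z\<in>bernstein_region \<zeta>.
                    cmod (1 - V \<iota> z / complex_of_real (\<sigma> * sgn (dv \<iota> 0)))
                      \<ge> K * ilen (Os \<iota>)))))"
proof (intro conjI)
  show "\<forall>\<iota>\<in>I. \<forall>\<sigma>\<in>{-1, 1::real}. v \<iota> \<sigma> \<notin> {-1, 1} \<longrightarrow>
            (\<forall>x\<in>{-1..1}.
               1 - v \<iota> x / (\<sigma> * sgn (dv \<iota> 0)) \<ge> ilen (Os \<iota>) / spacing_const I Os)"
  proof (intro ballI impI)
    fix \<iota> \<sigma> x assume i: "\<iota> \<in> I" and s: "\<sigma> \<in> {-1, 1::real}" and nv: "v \<iota> \<sigma> \<notin> {-1, 1}"
      and x: "x \<in> {-1..1::real}"
    show "1 - v \<iota> x / (\<sigma> * sgn (dv \<iota> 0)) \<ge> ilen (Os \<iota>) / spacing_const I Os"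
      using part1(2)[OF assms i s nv] x by (rule bspec)
  qed
  show "\<forall>\<delta> (V :: 'i \<Rightarrow> complex \<Rightarrow> complex). AD \<delta> I v V \<longrightarrow>
            (\<exists>\<zeta>. 0 < \<zeta> \<and> \<zeta> \<le> \<delta> \<and> (\<exists>K > 0.
               \<forall>\<iota>\<in>I. \<forall>\<sigma>\<in>{-1, 1::real}. v \<iota> \<sigma> \<notin> {-1, 1} \<longrightarrow>
                 (\<forall>z\<in>bernstein_region \<zeta>.
                    cmod (1 - V \<iota> z / complex_of_real (\<sigma> * sgn (dv \<iota> 0)))
                      \<ge> K * ilen (Os \<iota>))))"
  proof (intro allI impI)
    fix \<delta> and V :: "'i \<Rightarrow> complex \<Rightarrow> complex" assume "AD \<delta> I v V"
    thus "\<exists>\<zeta>. 0 < \<zeta> \<and> \<zeta> \<le> \<delta> \<and> (\<exists>K > 0.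
               \<forall>\<iota>\<in>I. \<forall>\<sigma>\<in>{-1, 1::real}. v \<iota> \<sigma> \<notin> {-1, 1} \<longrightarrow>
                 (\<forall>z\<in>bernstein_region \<zeta>.
                    cmod (1 - V \<iota> z / complex_of_real (\<sigma> * sgn (dv \<iota> 0)))
                      \<ge> K * ilen (Os \<iota>)))"
      by (rule part2[OF assms])
  qed
qed



end
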